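(* Let $n\ge 3$, let $F$ be a set of edges of $Q_n$, and let $T$ be a proper subset of the vertex set of $Q_n$ with $|T|\ge 3$ such that every edge of $Q_n$ joining a vertex of parity 0 in $T$ to a vertex outside $T$ belongs to $F$. If $|T|_0>|T|_1$, then $F$ is not minimal.
   Context: $Q_n$ is the $n$-dimensional hypercube on the binary strings of length $n$, two strings adjacent iff they differ in exactly one bit. The parity of a vertex is the number of ones in its label modulo 2. For a set $T$ of vertices, $|T|_0$ and $|T|_1$ denote the numbers of vertices of parity 0 and parity 1 in $T$. $F$ is a set of "faulty" edges; $Q_n-F$ is the graph with all vertices of $Q_n$ and the edges of $Q_n$ not in $F$. "$F$ is not minimal" means that there is a proper subset $F'\subsetneq F$ such that $Q_n-F'$ has no Hamiltonian cycle. *)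

theory Defs
  imports Main
begin

definition hc_verts :: "nat \<Rightarrow> bool list set" where
  "hc_verts n = {v. length v = n}"

definition hc_adj :: "bool list \<Rightarrow> bool list \<Rightarrow> bool" where
  "hc_adj u v \<longleftrightarrow> length u = length v \<and> card {i. i < length u \<and> u ! i \<noteq> v ! i} = 1"

definition hc_edges :: "nat \<Rightarrow> bool list set set" where
  "hc_edges n = {{u, v} | u v. u \<in> hc_verts n \<and> v \<in> hc_verts n \<and> hc_adj u v}"

definition parity :: "bool list \<Rightarrow> nat" where
  "parity v = count_list v True mod 2"

definition card_par :: "nat \<Rightarrow> bool list set \<Rightarrow> nat" where
  "card_par p T = card {v \<in> T. parity v = p}"

definition is_ham_cycle :: "'a set \<Rightarrow> 'a set set \<Rightarrow> 'a list \<Rightarrow> bool" where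
  "is_ham_cycle V E cs \<longleftrightarrow> distinct cs \<and> set cs = V \<and> length cs \<ge> 3 \<and>
     (\<forall>i < length cs. {cs ! i, cs ! ((i + 1) mod length cs)} \<in> E)"

definition hc_hamiltonian :: "nat \<Rightarrow> bool list set set \<Rightarrow> bool" where
  "hc_hamiltonian n F \<longleftrightarrow> (\<exists>cs. is_ham_cycle (hc_verts n) (hc_edges n - F) cs)"

definition not_minimal :: "nat \<Rightarrow> bool list set set \<Rightarrow> bool" where
  "not_minimal n F \<longleftrightarrow> (\<exists>F'. F' \<subset> F \<and> \<not> hc_hamiltonian n F')"

end

theory Submission
  imports Defs
begin

lemma count_upd:
  assumes "k < length u"
  shows "count_list (u[k := x]) True + (if u!k then 1 else 0) = count_list u True + (if x then 1 else 0)"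
proof -
  have a: "u = take k u @ u!k # drop (Suc k) u" using assms by (simp add: id_take_nth_drop)
  have b: "u[k:=x] = take k u @ x # drop (Suc k) u" using assms by (simp add: upd_conv_take_nth_drop)
  show ?thesis by (subst b, subst (2) a) auto
qed

lemma parity_flip:
  assumes "k < length u"
  shows "parity (u[k := \<not> u!k]) \<noteq> parity u"
  using count_upd[OF assms, of "\<not> u!k"] unfolding parity_def by (cases "u!k") (simp_all, presburger+)

lemma adj_flip:
  assumes "hc_adj u v"
  shows "\<exists>k<length u. v = u[k := \<not> u!k]"
proof -
  from assms have len: "length u = length v" and c: "card {i. i < length u \<and> u ! i \<noteq> v ! i} = 1"
    unfolding hc_adj_def by auto
  from c obtain k where k: "{i. i < length u \<and> u ! i \<noteq> v ! i} = {k}" using card_1_singletonE by blast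
  hence kl: "k < length u" and kd: "u!k \<noteq> v!k" by auto
  have "v = u[k := \<not> u!k]"
  proof (rule nth_equalityI)
    show "length v = length (u[k := \<not> u!k])" using len by simp
    fix i assume "i < length v"
    thus "v!i = u[k := \<not> u!k] ! i" using k kd len by (cases "i = k") auto
  qed
  thus ?thesis using kl by blast
qed

lemma adj_parity: "hc_adj u v \<Longrightarrow> parity v \<noteq> parity u"
  using adj_flip parity_flip by blast

lemma adj_sym: "hc_adj u v \<Longrightarrow> hc_adj v u"
proof -
  assume a: "hc_adj u v"
  hence "length u = length v" unfolding hc_adj_def by simp
  hence "{i. i < length v \<and> v ! i \<noteq> u ! i} = {i. i < length u \<and> u ! i \<noteq> v ! i}" by auto
  moreover have "card {i. i < length u \<and> u ! i \<noteq> v ! i} = 1" using a unfolding hc_adj_def by (elim conjE)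
  ultimately show ?thesis using \<open>length u = length v\<close> unfolding hc_adj_def by argo
qed

lemma flip_adj:
  assumes "k < length u" shows "hc_adj u (u[k := \<not> u!k])"
proof -
  have "{i. i < length u \<and> u ! i \<noteq> u[k := \<not> u!k] ! i} = {k}" using assms by (auto simp: nth_list_update)
  thus ?thesis unfolding hc_adj_def by simp
qed

lemma parity01: "parity v = 0 \<or> parity v = 1" unfolding parity_def by auto

lemma edge_par:
  assumes "{a,b} \<in> hc_edges n"
  shows "parity a \<noteq> parity b \<and> a \<in> hc_verts n \<and> b \<in> hc_verts n \<and> hc_adj a b"
proof -
  from assms obtain u v where "{a,b} = {u,v}" "u \<in> hc_verts n" "v \<in> hc_verts n" "hc_adj u v"
    unfolding hc_edges_def by blast
  thus ?thesis using adj_parity adj_sym by (metis doubleton_eq_iff)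
qed


lemma flip_flip: "k < length a \<Longrightarrow> (a[k := \<not> a!k])[k := \<not> (a[k := \<not> a!k])!k] = a"
  by simp

lemma step1:
  assumes n: "n \<ge> 3" and T: "T \<subset> hc_verts n" and fin: "finite T"
    and c: "card_par 0 T > card_par 1 T"
  shows "\<exists>u v. u \<in> T \<and> parity u = 0 \<and> v \<in> hc_verts n - T \<and> hc_adj u v"
proof (rule ccontr)
  assume na: "\<not> ?thesis"
  define T0 where "T0 = {v \<in> T. parity v = 0}"
  define T1 where "T1 = {v \<in> T. parity v = 1}"
  define f where "f = (\<lambda>(a::bool list, k::nat). (a[k := \<not> a!k], k))"
  have "f ` (T0 \<times> {..<n}) \<subseteq> T1 \<times> {..<n}"
  proof
    fix y assume "y \<in> f ` (T0 \<times> {..<n})"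
    then obtain a k where ak: "a \<in> T0" "k < n" "y = (a[k := \<not> a!k], k)" unfolding f_def by auto
    have la: "length a = n" using ak T unfolding T0_def hc_verts_def by auto
    have adj: "hc_adj a (a[k := \<not> a!k])" using flip_adj la ak by simp
    have v: "a[k := \<not> a!k] \<in> hc_verts n" using la unfolding hc_verts_def by simp
    have inT: "a[k := \<not> a!k] \<in> T" using na ak adj v unfolding T0_def by blast
    have "parity (a[k := \<not> a!k]) \<noteq> 0" using parity_flip[of k a] la ak unfolding T0_def by simp
    hence "parity (a[k := \<not> a!k]) = 1" using parity01[of "a[k := \<not> a!k]"] by linarith
    thus "y \<in> T1 \<times> {..<n}" using inT ak unfolding T1_def by simp
  qed
  moreover have "inj_on f (T0 \<times> {..<n})"
  proof (rule inj_onI)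
    fix x y assume x: "x \<in> T0 \<times> {..<n}" and y: "y \<in> T0 \<times> {..<n}" and e: "f x = f y"
    obtain a k where xa: "x = (a,k)" by fastforce
    obtain b k' where yb: "y = (b,k')" by fastforce
    have la: "length a = n" "length b = n" using x y xa yb T unfolding T0_def hc_verts_def by auto
    have kk: "k' = k" "k < n" using e xa yb x unfolding f_def by auto
    have "a[k := \<not> a!k] = b[k := \<not> b!k]" using e xa yb kk unfolding f_def by auto
    hence "a = b" using flip_flip[of k a] flip_flip[of k b] la kk by metis
    thus "x = y" using xa yb kk by simp
  qed
  moreover have "finite (T1 \<times> {..<n})" using fin unfolding T1_def by simp
  ultimately have "card (T0 \<times> {..<n}) \<le> card (T1 \<times> {..<n})" by (meson card_inj_on_le)
  hence "card T0 * n \<le> card T1 * n" by (simp add: card_cartesian_product)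
  hence "card T0 \<le> card T1" using n by simp
  thus False using c unfolding card_par_def T0_def T1_def by simp
qed


lemma spne_aux:
  fixes L i :: nat assumes i: "i < L" and L3: "L \<ge> 3"
  shows "(((i + 1) mod L) + 1) mod L \<noteq> i"
proof (cases "i + 1 < L")
  case True
  hence si: "(i + 1) mod L = i + 1" by simp
  show ?thesis
  proof (cases "i + 2 < L")
    case True
    thus ?thesis using si by simp
  next
    case False
    hence "i + 2 = L" using \<open>i + 1 < L\<close> by simp
    thus ?thesis using si L3 by auto
  qed
next
  case False
  hence "i + 1 = L" using i by simp
  thus ?thesis using L3 by auto
qed
lemma step2:
  assumes fin: "finite T" and TV: "T \<subseteq> hc_verts n" and vT: "v \<notin> T"
    and hyp: "\<forall>a b. a \<in> T \<and> parity a = 0 \<and> b \<in> hc_verts n - T \<and> hc_adj a b \<longrightarrow> {a, b} \<in> F' \<or> {a,b} = {u,v}"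
    and c: "card_par 0 T > card_par 1 T"
  shows "\<not> hc_hamiltonian n F'"
proof
  assume "hc_hamiltonian n F'"
  then obtain cs where H: "is_ham_cycle (hc_verts n) (hc_edges n - F') cs" unfolding hc_hamiltonian_def by blast
  define L where "L = length cs"
  have dist: "distinct cs" and setcs: "set cs = hc_verts n" and L3: "L \<ge> 3"
    and E: "\<And>i. i < L \<Longrightarrow> {cs ! i, cs ! ((i + 1) mod L)} \<in> hc_edges n - F'"
    using H unfolding is_ham_cycle_def L_def by auto
  define s where "s = (\<lambda>i. (i + 1) mod L)"
  define p where "p = (\<lambda>i. (i + L - 1) mod L)"
  have sL: "\<And>i. s i < L" and pL: "\<And>i. p i < L" using L3 unfolding s_def p_def by auto
  have sp: "\<And>i. i < L \<Longrightarrow> s (p i) = i"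
  proof -
    fix i assume "i < L"
    have "s (p i) = ((i + L - 1) + 1) mod L" unfolding s_def p_def by (simp add: mod_Suc_eq)
    also have "\<dots> = (i + L) mod L" using L3 by simp
    also have "\<dots> = i" using \<open>i < L\<close> by simp
    finally show "s (p i) = i" .
  qed
  have ps: "\<And>i. i < L \<Longrightarrow> p (s i) = i"
  proof -
    fix i assume "i < L"
    have "p (s i) = ((i + 1) mod L + (L - 1)) mod L" unfolding s_def p_def using L3 by (simp add: add.assoc)
    also have "\<dots> = (i + 1 + (L - 1)) mod L" by (simp add: mod_add_left_eq)
    also have "\<dots> = (i + L) mod L" using L3 by simp
    also have "\<dots> = i" using \<open>i < L\<close> by simp
    finally show "p (s i) = i" .
  qed
  have injs: "inj_on s {..<L}" by (rule inj_on_inverseI[where g = p]) (use ps in auto)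
  have injp: "inj_on p {..<L}" by (rule inj_on_inverseI[where g = s]) (use sp in auto)
  have spne: "\<And>i. i < L \<Longrightarrow> s i \<noteq> p i"
  proof
    fix i assume i: "i < L" and e: "s i = p i"
    have "s (s i) = i" using sp[OF i] e by simp
    thus False using spne_aux[OF i L3] unfolding s_def by simp
  qed
  define T0 where "T0 = {x \<in> T. parity x = 0}"
  define T1 where "T1 = {x \<in> T. parity x = 1}"
  define I where "I = {i. i < L \<and> cs ! i \<in> T0}"
  define J where "J = {i. i < L \<and> cs ! i \<in> T1}"
  define Bs where "Bs = {i \<in> I. s i \<notin> J}"
  define Bp where "Bp = {i \<in> I. p i \<notin> J}"
  have finI: "finite I" "finite J" unfolding I_def J_def by auto
  have csV: "\<And>i. i < L \<Longrightarrow> cs ! i \<in> hc_verts n" using setcs L_def nth_mem by blast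
  have bad: "\<And>a b. a \<in> T0 \<Longrightarrow> {a, b} \<in> hc_edges n - F' \<Longrightarrow> b \<notin> T1 \<Longrightarrow> a = u \<and> b = v"
  proof -
    fix a b assume a: "a \<in> T0" and e: "{a, b} \<in> hc_edges n - F'" and b: "b \<notin> T1"
    have ep: "parity a \<noteq> parity b" "b \<in> hc_verts n" "hc_adj a b" using edge_par[of a b n] e by auto
    have "parity b = 1" using ep a parity01[of b] unfolding T0_def by auto
    hence "b \<notin> T" using b unfolding T1_def by auto
    hence "{a,b} = {u,v}" using hyp a ep e unfolding T0_def by blast
    moreover have "a \<noteq> v" using a vT unfolding T0_def by auto
    ultimately show "a = u \<and> b = v" by (metis doubleton_eq_iff)
  qed
  have Bs_u: "\<And>i. i \<in> Bs \<Longrightarrow> cs ! i = u \<and> cs ! (s i) = v"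
  proof -
    fix i assume i: "i \<in> Bs"
    hence "i < L" "cs ! i \<in> T0" "cs ! (s i) \<notin> T1" using sL unfolding Bs_def I_def J_def by auto
    thus "cs ! i = u \<and> cs ! (s i) = v" using bad E unfolding s_def by blast
  qed
  have Bp_u: "\<And>i. i \<in> Bp \<Longrightarrow> cs ! i = u \<and> cs ! (p i) = v"
  proof -
    fix i assume i: "i \<in> Bp"
    hence il: "i < L" "cs ! i \<in> T0" "cs ! (p i) \<notin> T1" using pL unfolding Bp_def I_def J_def by auto
    have "{cs ! (p i), cs ! (s (p i))} \<in> hc_edges n - F'" using E[OF pL[of i]] unfolding s_def by simp
    hence "{cs ! i, cs ! (p i)} \<in> hc_edges n - F'" using sp[OF il(1)] by (simp add: insert_commute)
    thus "cs ! i = u \<and> cs ! (p i) = v" using bad il by blast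
  qed
  have uniq: "\<And>i j. i < L \<Longrightarrow> j < L \<Longrightarrow> cs ! i = cs ! j \<Longrightarrow> i = j"
    using dist nth_eq_iff_index_eq L_def by blast
  have allEq: "\<forall>a1\<in>Bs \<union> Bp. \<forall>a2\<in>Bs \<union> Bp. a1 = a2"
  proof (intro ballI)
    fix a1 a2 assume "a1 \<in> Bs \<union> Bp" "a2 \<in> Bs \<union> Bp"
    moreover have "\<And>i. i \<in> Bs \<union> Bp \<Longrightarrow> i < L" unfolding Bs_def Bp_def I_def by auto
    ultimately have "a1 < L" "a2 < L" "cs ! a1 = u" "cs ! a2 = u" using Bs_u Bp_u by blast+
    thus "a1 = a2" using uniq by metis
  qed
  have finU: "finite (Bs \<union> Bp)" using finI unfolding Bs_def Bp_def by auto
  have c1: "card (Bs \<union> Bp) \<le> 1" using card_le_Suc0_iff_eq[OF finU] allEq by simp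
  have disj: "Bs \<inter> Bp = {}"
  proof (rule ccontr)
    assume "Bs \<inter> Bp \<noteq> {}"
    then obtain i where iB: "i \<in> Bs" "i \<in> Bp" by blast
    have eq: "cs ! (s i) = cs ! (p i)" using Bs_u[OF iB(1)] Bp_u[OF iB(2)] by simp
    have il: "i < L" using iB(1) unfolding Bs_def I_def by simp
    have "s i = p i" using uniq[OF sL[of i] pL[of i] eq] .
    thus False using spne[OF il] by simp
  qed
  have finB: "finite Bs" "finite Bp" using finI unfolding Bs_def Bp_def by auto
  have cB: "card Bs + card Bp \<le> 1" using c1 card_Un_disjoint[OF finB disj] by simp
  have "card (I - Bs) \<le> card J"
  proof -
    have "s ` (I - Bs) \<subseteq> J" unfolding Bs_def I_def J_def using sL by auto
    moreover have "inj_on s (I - Bs)" using injs by (rule inj_on_subset) (auto simp: I_def)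
    ultimately show ?thesis using finI card_inj_on_le by blast
  qed
  moreover have "card (I - Bp) \<le> card J"
  proof -
    have "p ` (I - Bp) \<subseteq> J" unfolding Bp_def I_def J_def using pL by auto
    moreover have "inj_on p (I - Bp)" using injp by (rule inj_on_subset) (auto simp: I_def)
    ultimately show ?thesis using finI card_inj_on_le by blast
  qed
  moreover have sub: "Bs \<subseteq> I" "Bp \<subseteq> I" unfolding Bs_def Bp_def by auto
  moreover have "card I = card (I - Bs) + card Bs"
    using sub(1) finI(1) by (metis card_Diff_subset card_mono le_add_diff_inverse2 finite_subset)
  moreover have "card I = card (I - Bp) + card Bp"
    using sub(2) finI(1) by (metis card_Diff_subset card_mono le_add_diff_inverse2 finite_subset)
  ultimately have key: "2 * card I \<le> 2 * card J + 1" using cB by linarith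
  have cI: "card I = card T0"
  proof -
    have inj: "inj_on ((!) cs) I" using uniq unfolding I_def by (auto intro: inj_onI)
    moreover have im: "(!) cs ` I = T0"
    proof
      show "(!) cs ` I \<subseteq> T0" unfolding I_def by auto
      show "T0 \<subseteq> (!) cs ` I"
      proof
        fix x assume x: "x \<in> T0"
        have "x \<in> set cs" using x TV setcs unfolding T0_def T1_def by auto
        then obtain i where "i < L" "cs ! i = x" using in_set_conv_nth L_def by metis
        thus "x \<in> (!) cs ` I" using x unfolding I_def by auto
      qed
    qed
    show ?thesis using card_image[OF inj] im by simp
  qed
  have cJ: "card J = card T1"
  proof -
    have inj: "inj_on ((!) cs) J" using uniq unfolding J_def by (auto intro: inj_onI)
    moreover have im: "(!) cs ` J = T1"
    proof
      show "(!) cs ` J \<subseteq> T1" unfolding J_def by auto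
      show "T1 \<subseteq> (!) cs ` J"
      proof
        fix x assume x: "x \<in> T1"
        have "x \<in> set cs" using x TV setcs unfolding T0_def T1_def by auto
        then obtain i where "i < L" "cs ! i = x" using in_set_conv_nth L_def by metis
        thus "x \<in> (!) cs ` J" using x unfolding J_def by auto
      qed
    qed
    show ?thesis using card_image[OF inj] im by simp
  qed
  show False using key cI cJ c unfolding card_par_def T0_def T1_def by linarith
qed

theorem lemma4:
  fixes n :: nat and F :: "bool list set set" and T :: "bool list set"
  assumes "n \<ge> 3"
    and "F \<subseteq> hc_edges n"
    and "T \<subset> hc_verts n"
    and "card T \<ge> 3"
    and "\<forall>u v. u \<in> T \<and> parity u = 0 \<and> v \<in> hc_verts n - T \<and> hc_adj u v \<longrightarrow> {u, v} \<in> F"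
    and "card_par 0 T > card_par 1 T"
  shows "not_minimal n F"
proof -
  have fin: "finite T" using assms(4) by (metis card.infinite not_numeral_le_zero)
  obtain u v where uv: "u \<in> T" "parity u = 0" "v \<in> hc_verts n - T" "hc_adj u v"
    using step1[OF assms(1) assms(3) fin assms(6)] by blast
  have eF: "{u, v} \<in> F" using assms(5) uv by blast
  define F' where "F' = F - {{u, v}}"
  have sub: "F' \<subset> F" using eF unfolding F'_def by blast
  have TV: "T \<subseteq> hc_verts n" using assms(3) by blast
  have vT: "v \<notin> T" using uv by blast
  have hyp: "\<forall>a b. a \<in> T \<and> parity a = 0 \<and> b \<in> hc_verts n - T \<and> hc_adj a b \<longrightarrow> {a, b} \<in> F' \<or> {a,b} = {u,v}"
    using assms(5) unfolding F'_def by blast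
  have "\<not> hc_hamiltonian n F'" using step2[OF fin TV vT hyp assms(6)] .
  thus ?thesis using sub unfolding not_minimal_def by blast
qed

end
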